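(* Let $J,\mu\in\mathbb{R}$, $\Delta\neq0$, $T>0$, and let $(\kappa_l)_{l\ge1}$ be any real sequence. There is a constant $C$ depending only on $J,\mu,\Delta,T$ (not on $N$, $k$ or $\kappa$) such that for every even $N\ge4$ and every $k\in\{(2n+1)\pi/N:n=0,\dots,N-1\}$ with $\epsilon(k)>0$, $$\Big|\mathscr{E}_\Delta(k)-\tfrac{T}{2}|f_N(k)|\Big|\le C .$$ Consequently, with $\gamma(N)=\sum_{n=0}^{N-1}|f_N(k_n)|$ and the uncontrolled quantum Fisher information $I(\Delta)=\big(\sum_k\mathscr{E}_\Delta(k)\big)^2$ (sum over those $k$ with $\epsilon(k)>0$, all others having $f_N(k)=0$), one has $\big|\sqrt{I(\Delta)}-T\gamma(N)/2\big|\le CN$; hence the divergence near $k=0$ and the leading scaling with $N$ are the same as for the optimally controlled value $I_0(\Delta)=[\gamma(N)/2]^2T^2$ whenever $\gamma(N)$ grows at least linearly in $N$.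
   Context: Let $f_N(k)=2\sum_{l=1}^{N/2-1}\kappa_l\sin(kl)+\kappa_{N/2}$ and $\epsilon(k)=\sqrt{[\Delta f_N(k)/2]^2+(J\cos k+\mu)^2}$ (the Bogoliubov quasiparticle energy of the long-range Kitaev chain). For a parameter $\theta$, given real functions $a_\theta(k)$ and $\xi_\theta(k)$, set $$\mathscr{E}_\theta(k)=\Big\{T^2a_\theta(k)^2+\tfrac14\xi_\theta(k)^2\sin^2[2\epsilon(k)T]+\tfrac14\xi_\theta(k)^2\big(1-\cos[2\epsilon(k)T]\big)^2\Big\}^{1/2},$$ the single-mode eigenvalues of the estimation generator. For $\theta=\Delta$: $a_\Delta(k)=\partial_\Delta\epsilon(k)=\Delta f_N(k)^2/[4\epsilon(k)]$ and $\xi_\Delta(k)=-(J\cos k+\mu)f_N(k)/[2\epsilon(k)^2]$. *)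

theory Defs
  imports Complex_Main
begin

text \<open>Long-range Kitaev chain: pairing profile f_N(k); kappa is indexed from 1 (kappa 0 unused).\<close>
definition fN :: "(nat \<Rightarrow> real) \<Rightarrow> nat \<Rightarrow> real \<Rightarrow> real" where
  "fN \<kappa> N k = 2 * (\<Sum>l=1..N div 2 - 1. \<kappa> l * sin (k * real l)) + \<kappa> (N div 2)"

definition eps :: "real \<Rightarrow> real \<Rightarrow> real \<Rightarrow> (nat \<Rightarrow> real) \<Rightarrow> nat \<Rightarrow> real \<Rightarrow> real" where
  "eps J \<mu> \<Delta> \<kappa> N k = sqrt ((\<Delta> * fN \<kappa> N k / 2)\<^sup>2 + (J * cos k + \<mu>)\<^sup>2)"

text \<open>a_Delta(k) = d eps / d Delta.\<close>
definition aDelta :: "real \<Rightarrow> real \<Rightarrow> real \<Rightarrow> (nat \<Rightarrow> real) \<Rightarrow> nat \<Rightarrow> real \<Rightarrow> real" where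
  "aDelta J \<mu> \<Delta> \<kappa> N k = \<Delta> * (fN \<kappa> N k)\<^sup>2 / (4 * eps J \<mu> \<Delta> \<kappa> N k)"

definition xiDelta :: "real \<Rightarrow> real \<Rightarrow> real \<Rightarrow> (nat \<Rightarrow> real) \<Rightarrow> nat \<Rightarrow> real \<Rightarrow> real" where
  "xiDelta J \<mu> \<Delta> \<kappa> N k =
     - (J * cos k + \<mu>) * fN \<kappa> N k / (2 * (eps J \<mu> \<Delta> \<kappa> N k)\<^sup>2)"

definition scrE :: "real \<Rightarrow> real \<Rightarrow> real \<Rightarrow> real \<Rightarrow> real" where
  "scrE T a \<xi> \<epsilon> = sqrt (T\<^sup>2 * a\<^sup>2 + \<xi>\<^sup>2 / 4 * (sin (2 * \<epsilon> * T))\<^sup>2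
                          + \<xi>\<^sup>2 / 4 * (1 - cos (2 * \<epsilon> * T))\<^sup>2)"

definition scrE_Delta :: "real \<Rightarrow> real \<Rightarrow> real \<Rightarrow> real \<Rightarrow> (nat \<Rightarrow> real) \<Rightarrow> nat \<Rightarrow> real \<Rightarrow> real" where
  "scrE_Delta J \<mu> \<Delta> T \<kappa> N k =
     scrE T (aDelta J \<mu> \<Delta> \<kappa> N k) (xiDelta J \<mu> \<Delta> \<kappa> N k) (eps J \<mu> \<Delta> \<kappa> N k)"

definition kmom :: "nat \<Rightarrow> nat \<Rightarrow> real" where
  "kmom N n = (2 * real n + 1) * pi / real N"

definition momenta :: "nat \<Rightarrow> real set" where
  "momenta N = kmom N ` {..<N}"

definition gammaN :: "(nat \<Rightarrow> real) \<Rightarrow> nat \<Rightarrow> real" where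
  "gammaN \<kappa> N = (\<Sum>n<N. \<bar>fN \<kappa> N (kmom N n)\<bar>)"

definition QFI :: "real \<Rightarrow> real \<Rightarrow> real \<Rightarrow> real \<Rightarrow> (nat \<Rightarrow> real) \<Rightarrow> nat \<Rightarrow> real" where
  "QFI J \<mu> \<Delta> T \<kappa> N =
     (\<Sum>k\<in>{k\<in>momenta N. eps J \<mu> \<Delta> \<kappa> N k > 0}. scrE_Delta J \<mu> \<Delta> T \<kappa> N k)\<^sup>2"

end

theory Submission
  imports Defs
begin

lemma core:
  fixes D F g T e :: real
  assumes D: "D \<noteq> 0" and T: "T > 0" and e: "e = sqrt ((D * F / 2)\<^sup>2 + g\<^sup>2)" and ep: "e > 0"
  shows "\<bar>scrE T (D * F\<^sup>2 / (4 * e)) (- g * F / (2 * e\<^sup>2)) e - T / 2 * \<bar>F\<bar>\<bar> \<le> T * \<bar>g\<bar> / (2 * \<bar>D\<bar>) + 1 / \<bar>D\<bar>"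
proof -
  define x where "x = \<bar>D * F\<bar> / 2"
  define y where "y = \<bar>g\<bar>"
  have x0: "x \<ge> 0" and y0: "y \<ge> 0" by (auto simp: x_def y_def)
  have e2: "e\<^sup>2 = x\<^sup>2 + y\<^sup>2" using e by (simp add: x_def y_def power2_eq_square abs_mult_self_eq)
  have ex: "x \<le> e"
  proof (rule power2_le_imp_le)
    show "x\<^sup>2 \<le> e\<^sup>2" using e2 by simp
  qed (use ep in simp)
  have ey: "y \<le> e"
  proof (rule power2_le_imp_le)
    show "y\<^sup>2 \<le> e\<^sup>2" using e2 by simp
  qed (use ep in simp)
  have am: "2 * x * y \<le> e\<^sup>2" using e2 sum_squares_bound[of x y] by simp
  have Fx: "\<bar>F\<bar> = 2 * x / \<bar>D\<bar>" using D by (simp add: x_def abs_mult)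
  define a where "a = D * F\<^sup>2 / (4 * e)"
  define \<xi> where "\<xi> = - g * F / (2 * e\<^sup>2)"
  have aabs: "\<bar>a\<bar> = \<bar>F\<bar> * x / (2 * e)" using ep
    by (simp add: a_def x_def abs_mult power2_eq_square field_simps)
  have diff: "x * (e - x) \<le> e * y / 2"
  proof -
    have "x * (e - x) * (e + x) = x * (e\<^sup>2 - x\<^sup>2)" by (simp add: algebra_simps power2_eq_square)
    also have "\<dots> = x * y\<^sup>2" using e2 by simp
    finally have "x * (e - x) * (e + x) = x * y\<^sup>2" .
    moreover have "x * y\<^sup>2 \<le> e * y / 2 * (e + x)"
    proof -
      have "2 * x * y \<le> e * (e + x)" proof -
        have "e * x \<ge> 0" using ep x0 by simp
        hence "e\<^sup>2 \<le> e * (e + x)" by (simp add: power2_eq_square distrib_left)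
        thus ?thesis using am by linarith
      qed
      hence "y * (2 * x * y) \<le> y * (e * (e + x))" using y0 by (rule mult_left_mono)
      thus ?thesis by (simp add: algebra_simps power2_eq_square)
    qed
    ultimately have "x * (e - x) * (e + x) \<le> e * y / 2 * (e + x)" by (simp only:)
    moreover have "e + x > 0" using ep x0 by simp
    ultimately show ?thesis by (metis mult_le_cancel_right_pos)
  qed
  have a1: "\<bar>F\<bar> / 2 - \<bar>a\<bar> = x * (e - x) / (\<bar>D\<bar> * e)"
    using ep D by (simp add: aabs Fx field_simps)
  have a2: "\<bar>F\<bar> / 2 - \<bar>a\<bar> \<ge> 0" unfolding a1 using ex x0 ep by simp
  have a3: "\<bar>F\<bar> / 2 - \<bar>a\<bar> \<le> y / (2 * \<bar>D\<bar>)"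
  proof -
    have "x * (e - x) / (\<bar>D\<bar> * e) \<le> (e * y / 2) / (\<bar>D\<bar> * e)"
      using diff ep D by (intro divide_right_mono) auto
    also have "\<dots> = y / (2 * \<bar>D\<bar>)" using ep by simp
    finally show ?thesis using a1 by simp
  qed
  have xiabs: "\<bar>\<xi>\<bar> = x * y / (\<bar>D\<bar> * e\<^sup>2)" using ep D
    by (simp add: \<xi>_def Fx y_def abs_mult abs_divide field_simps)
  have xib: "\<bar>\<xi>\<bar> \<le> 1 / (2 * \<bar>D\<bar>)"
  proof -
    have "x * y / (\<bar>D\<bar> * e\<^sup>2) \<le> (e\<^sup>2 / 2) / (\<bar>D\<bar> * e\<^sup>2)"
      using am ep D by (intro divide_right_mono) auto
    also have "\<dots> = 1 / (2 * \<bar>D\<bar>)" using ep by simp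
    finally show ?thesis using xiabs by simp
  qed
  define B where "B = \<xi>\<^sup>2 / 4 * (sin (2 * e * T))\<^sup>2 + \<xi>\<^sup>2 / 4 * (1 - cos (2 * e * T))\<^sup>2"
  have B0: "B \<ge> 0" by (simp add: B_def)
  have "(sin (2 * e * T))\<^sup>2 + (1 - cos (2 * e * T))\<^sup>2 \<le> 5"
  proof -
    have "(sin (2 * e * T))\<^sup>2 \<le> 1" by (simp add: abs_sin_le_one abs_square_le_1)
    moreover have "\<bar>1 - cos (2 * e * T)\<bar> \<le> 2" using abs_cos_le_one[of "2*e*T"] by linarith
    hence "\<bar>1 - cos (2 * e * T)\<bar>\<^sup>2 \<le> 2\<^sup>2" by (intro power_mono) auto
    hence "(1 - cos (2 * e * T))\<^sup>2 \<le> 2\<^sup>2" by simp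
    ultimately show ?thesis by simp
  qed
  hence "\<xi>\<^sup>2 / 4 * ((sin (2 * e * T))\<^sup>2 + (1 - cos (2 * e * T))\<^sup>2) \<le> \<xi>\<^sup>2 / 4 * 5"
    by (intro mult_left_mono) auto
  hence "B \<le> \<xi>\<^sup>2 / 4 * 5" unfolding B_def by (simp add: distrib_left)
  also have "\<xi>\<^sup>2 \<le> (1 / (2 * \<bar>D\<bar>))\<^sup>2" proof -
    have "\<bar>\<xi>\<bar>\<^sup>2 \<le> (1 / (2 * \<bar>D\<bar>))\<^sup>2" using xib by (intro power_mono) auto
    thus ?thesis by simp
  qed
  hence "\<xi>\<^sup>2 / 4 * 5 \<le> (1 / (2 * \<bar>D\<bar>))\<^sup>2 / 4 * 5" by simp
  also have "\<dots> \<le> (1 / \<bar>D\<bar>)\<^sup>2"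
  proof -
    have "(1 / (2 * \<bar>D\<bar>))\<^sup>2 = (1 / \<bar>D\<bar>)\<^sup>2 / 4" by (simp add: power2_eq_square)
    moreover have "(1 / \<bar>D\<bar>)\<^sup>2 \<ge> 0" by simp
    ultimately show ?thesis by linarith
  qed
  finally have "sqrt B \<le> sqrt ((1 / \<bar>D\<bar>)\<^sup>2)" by (rule real_sqrt_le_mono)
  hence Bb: "sqrt B \<le> 1 / \<bar>D\<bar>" by simp
  have S: "scrE T a \<xi> e = sqrt ((T * \<bar>a\<bar>)\<^sup>2 + B)"
    by (simp add: scrE_def B_def power_mult_distrib add.assoc)
  have Ta: "sqrt ((T * \<bar>a\<bar>)\<^sup>2) = T * \<bar>a\<bar>" using T by simp
  have lo: "T * \<bar>a\<bar> \<le> sqrt ((T * \<bar>a\<bar>)\<^sup>2 + B)"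
  proof -
    have "sqrt ((T * \<bar>a\<bar>)\<^sup>2) \<le> sqrt ((T * \<bar>a\<bar>)\<^sup>2 + B)" using B0 by (intro real_sqrt_le_mono) simp
    thus ?thesis using Ta by simp
  qed
  have hi: "sqrt ((T * \<bar>a\<bar>)\<^sup>2 + B) \<le> T * \<bar>a\<bar> + sqrt B"
    using sqrt_add_le_add_sqrt[of "(T * \<bar>a\<bar>)\<^sup>2" B] B0 Ta by simp
  have "T * (\<bar>F\<bar> / 2 - \<bar>a\<bar>) \<le> T * (y / (2 * \<bar>D\<bar>))" using a3 T by (intro mult_left_mono) auto
  moreover have "T * (\<bar>F\<bar> / 2 - \<bar>a\<bar>) \<ge> 0" using a2 T by simp
  moreover have "T * (y / (2 * \<bar>D\<bar>)) = T * \<bar>g\<bar> / (2 * \<bar>D\<bar>)" by (simp add: y_def)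
  moreover have "scrE T (D * F\<^sup>2 / (4 * e)) (- g * F / (2 * e\<^sup>2)) e = scrE T a \<xi> e"
    by (simp add: a_def \<xi>_def)
  moreover have "T * (\<bar>F\<bar> / 2 - \<bar>a\<bar>) = T / 2 * \<bar>F\<bar> - T * \<bar>a\<bar>" by (simp add: algebra_simps)
  ultimately have X: "T / 2 * \<bar>F\<bar> - T * \<bar>a\<bar> \<le> T * \<bar>g\<bar> / (2 * \<bar>D\<bar>)"
    "0 \<le> T / 2 * \<bar>F\<bar> - T * \<bar>a\<bar>"
    "scrE T (D * F\<^sup>2 / (4 * e)) (- g * F / (2 * e\<^sup>2)) e = sqrt ((T * \<bar>a\<bar>)\<^sup>2 + B)"
    using S by auto
  show ?thesis unfolding X(3) abs_le_iff using X(1,2) lo hi Bb by linarith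
qed

theorem mainTheorem9:
  fixes J \<mu> \<Delta> T :: real
  assumes "\<Delta> \<noteq> 0" and "T > 0"
  shows "\<exists>C::real.
    (\<forall>(\<kappa>::nat \<Rightarrow> real) (N::nat) k. even N \<longrightarrow> N \<ge> 4 \<longrightarrow> k \<in> momenta N \<longrightarrow>
        eps J \<mu> \<Delta> \<kappa> N k > 0 \<longrightarrow>
        \<bar>scrE_Delta J \<mu> \<Delta> T \<kappa> N k - T / 2 * \<bar>fN \<kappa> N k\<bar>\<bar> \<le> C)
  \<and> (\<forall>(\<kappa>::nat \<Rightarrow> real) (N::nat). even N \<longrightarrow> N \<ge> 4 \<longrightarrow>
        \<bar>sqrt (QFI J \<mu> \<Delta> T \<kappa> N) - T * gammaN \<kappa> N / 2\<bar> \<le> C * real N)"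
proof -
  define C where "C = T * (\<bar>J\<bar> + \<bar>\<mu>\<bar>) / (2 * \<bar>\<Delta>\<bar>) + 1 / \<bar>\<Delta>\<bar>"
  have C0: "C \<ge> 0" using assms by (simp add: C_def)
  have pt: "\<bar>scrE_Delta J \<mu> \<Delta> T \<kappa> N k - T / 2 * \<bar>fN \<kappa> N k\<bar>\<bar> \<le> C"
    if ep: "eps J \<mu> \<Delta> \<kappa> N k > 0" for \<kappa> N k
  proof -
    have "\<bar>J * cos k + \<mu>\<bar> \<le> \<bar>J\<bar> + \<bar>\<mu>\<bar>"
    proof -
      have "\<bar>J * cos k\<bar> \<le> \<bar>J\<bar>" using abs_cos_le_one[of k]
        by (simp add: abs_mult mult_left_le)
      thus ?thesis by linarith
    qed
    hence g: "T * \<bar>J * cos k + \<mu>\<bar> / (2 * \<bar>\<Delta>\<bar>) \<le> T * (\<bar>J\<bar> + \<bar>\<mu>\<bar>) / (2 * \<bar>\<Delta>\<bar>)"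
      using assms by (intro divide_right_mono mult_left_mono) auto
    have "\<bar>scrE_Delta J \<mu> \<Delta> T \<kappa> N k - T / 2 * \<bar>fN \<kappa> N k\<bar>\<bar>
       \<le> T * \<bar>J * cos k + \<mu>\<bar> / (2 * \<bar>\<Delta>\<bar>) + 1 / \<bar>\<Delta>\<bar>"
      unfolding scrE_Delta_def aDelta_def xiDelta_def
      by (rule core[OF assms eps_def ep])
    thus ?thesis using g unfolding C_def by linarith
  qed
  have part2: "\<bar>sqrt (QFI J \<mu> \<Delta> T \<kappa> N) - T * gammaN \<kappa> N / 2\<bar> \<le> C * real N"
    if N: "N \<ge> 4" for \<kappa> N
  proof -
    define S where "S = {k\<in>momenta N. eps J \<mu> \<Delta> \<kappa> N k > 0}"
    have inj: "inj_on (kmom N) {..<N}" using N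
      by (auto simp: inj_on_def kmom_def)
    have fin: "finite (momenta N)" by (simp add: momenta_def)
    have finS: "finite S" using fin by (simp add: S_def)
    have cardS: "card S \<le> N"
    proof -
      have "card S \<le> card (momenta N)" using fin by (intro card_mono) (auto simp: S_def)
      also have "\<dots> = N" using inj by (simp add: momenta_def card_image)
      finally show ?thesis .
    qed
    have gam: "gammaN \<kappa> N = (\<Sum>k\<in>momenta N. \<bar>fN \<kappa> N k\<bar>)"
      unfolding gammaN_def momenta_def using inj by (simp add: sum.reindex)
    have zero: "fN \<kappa> N k = 0" if "k \<in> momenta N - S" for k
    proof -
      have "eps J \<mu> \<Delta> \<kappa> N k \<le> 0" using that by (auto simp: S_def)
      hence le: "(\<Delta> * fN \<kappa> N k / 2)\<^sup>2 + (J * cos k + \<mu>)\<^sup>2 \<le> 0" by (simp add: eps_def)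
      have "(\<Delta> * fN \<kappa> N k / 2)\<^sup>2 + (J * cos k + \<mu>)\<^sup>2 \<ge> 0" by simp
      hence "(\<Delta> * fN \<kappa> N k / 2)\<^sup>2 + (J * cos k + \<mu>)\<^sup>2 = 0" using le by linarith
      hence "\<Delta> * fN \<kappa> N k / 2 = 0" using sum_power2_eq_zero_iff by blast
      thus ?thesis using assms by simp
    qed
    have gam2: "gammaN \<kappa> N = (\<Sum>k\<in>S. \<bar>fN \<kappa> N k\<bar>)"
    proof -
      have "(\<Sum>k\<in>momenta N. \<bar>fN \<kappa> N k\<bar>) = (\<Sum>k\<in>S. \<bar>fN \<kappa> N k\<bar>)"
        using fin zero by (intro sum.mono_neutral_right) (auto simp: S_def)
      thus ?thesis using gam by simp
    qed
    have nn: "scrE_Delta J \<mu> \<Delta> T \<kappa> N k \<ge> 0" for k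
      by (simp add: scrE_Delta_def scrE_def)
    have q: "sqrt (QFI J \<mu> \<Delta> T \<kappa> N) = (\<Sum>k\<in>S. scrE_Delta J \<mu> \<Delta> T \<kappa> N k)"
      unfolding QFI_def S_def[symmetric] using nn by (simp add: sum_nonneg)
    have "\<bar>sqrt (QFI J \<mu> \<Delta> T \<kappa> N) - T * gammaN \<kappa> N / 2\<bar>
        = \<bar>\<Sum>k\<in>S. (scrE_Delta J \<mu> \<Delta> T \<kappa> N k - T / 2 * \<bar>fN \<kappa> N k\<bar>)\<bar>"
      by (simp add: q gam2 sum_subtractf sum_distrib_left sum_divide_distrib)
    also have "\<dots> \<le> (\<Sum>k\<in>S. \<bar>scrE_Delta J \<mu> \<Delta> T \<kappa> N k - T / 2 * \<bar>fN \<kappa> N k\<bar>\<bar>)"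
      by (rule sum_abs)
    also have "\<dots> \<le> (\<Sum>k\<in>S. C)" using pt by (intro sum_mono) (auto simp: S_def)
    also have "\<dots> = C * real (card S)" by simp
    also have "\<dots> \<le> C * real N" using cardS C0 by (intro mult_left_mono) auto
    finally show ?thesis .
  qed
  show ?thesis using pt part2 by blast
qed

end
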